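(* Let $G=A_{n,k}$ be an almost-path graph and let $\mathcal{I}$ be a lower order ideal in the poset (ordered by inclusion) of vertex sets $\varnothing\neq I\subseteq[n+1]$ with $G[I]$ connected. Then the ideal subarrangement $\mathcal{A}_{\mathcal{I}}:=\{H_I\mid I\in\mathcal{I}\}$ of $\mathcal{A}_G$ is MAT-free.
   Context: For $1\le k\le n$, the almost-path graph $A_{n,k}$ has vertex set $[n+1]$ and edges $\{i,i+1\}$ for $1\le i\le n-1$ together with $\{k,n+1\}$. For a graph $G$ on $[m]$, $H_I:=\ker(\sum_{i\in I}x_i)\subseteq\mathbb{Q}^m$ and $\mathcal{A}_G:=\{H_I\mid\varnothing\neq I\subseteq[m],\ G[I]\text{ connected}\}$. An arrangement $\mathcal{A}$ in $V$ is MAT-free if there is an ordered partition $(\pi_1|\dots|\pi_r)$ of $\mathcal{A}$ such that, with $\mathcal{A}_0:=\varnothing$ and $\mathcal{A}_k:=\pi_1\cup\dots\cup\pi_k$, for every $0\le k\le r-1$: (1) the hyperplanes of $\pi_{k+1}$ are linearly independent (rank $|\pi_{k+1}|$); (2) $\bigcap_{H\in\pi_{k+1}}H\not\subseteq\bigcup_{H'\in\mathcal{A}_k}H'$; (3) $|\mathcal{A}_k|-|\{H\cap H'\mid H'\in\mathcal{A}_k\}|=k$ for each $H\in\pi_{k+1}$. *)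

theory Defs
  imports Complex_Main
begin

text \<open>Ambient space Q^m, realised as functions nat => rat supported on {1..m}.\<close>
definition ambient :: "nat \<Rightarrow> (nat \<Rightarrow> rat) set" where
  "ambient m = {x. \<forall>i. i \<notin> {1..m} \<longrightarrow> x i = 0}"

definition hyp :: "nat \<Rightarrow> (nat \<Rightarrow> rat) \<Rightarrow> (nat \<Rightarrow> rat) set" where
  "hyp m a = {x \<in> ambient m. (\<Sum>i=1..m. a i * x i) = 0}"

definition H_of :: "nat \<Rightarrow> nat set \<Rightarrow> (nat \<Rightarrow> rat) set" where
  "H_of m I = {x \<in> ambient m. (\<Sum>i\<in>I. x i) = 0}"

definition lin_indep_forms :: "nat \<Rightarrow> (nat \<Rightarrow> rat) set \<Rightarrow> bool" where
  "lin_indep_forms m S \<longleftrightarrow> finite S \<and>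
     (\<forall>c :: (nat \<Rightarrow> rat) \<Rightarrow> rat. (\<forall>j\<in>{1..m}. (\<Sum>a\<in>S. c a * a j) = 0) \<longrightarrow> (\<forall>a\<in>S. c a = 0))"

text \<open>A set of hyperplanes in Q^m is linearly independent (has rank equal to its cardinality):
  one can choose defining forms, one per hyperplane, which are linearly independent.\<close>
definition indep_hyps :: "nat \<Rightarrow> (nat \<Rightarrow> rat) set set \<Rightarrow> bool" where
  "indep_hyps m P \<longleftrightarrow> (\<exists>f. inj_on f P \<and>
     (\<forall>H\<in>P. f H \<in> ambient m \<and> f H \<noteq> (\<lambda>_. 0) \<and> H = hyp m (f H)) \<and>
     lin_indep_forms m (f ` P))"

definition ordered_partition :: "'a set \<Rightarrow> 'a set list \<Rightarrow> bool" where
  "ordered_partition A ps \<longleftrightarrow> (\<forall>p\<in>set ps. p \<noteq> {}) \<and>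
     (\<forall>i<length ps. \<forall>j<length ps. i \<noteq> j \<longrightarrow> ps!i \<inter> ps!j = {}) \<and> \<Union>(set ps) = A"

definition MAT_free :: "nat \<Rightarrow> (nat \<Rightarrow> rat) set set \<Rightarrow> bool" where
  "MAT_free m A \<longleftrightarrow> (\<exists>ps. ordered_partition A ps \<and>
     (\<forall>k < length ps.
        let Ak = \<Union>(set (take k ps)); p = ps ! k in
        indep_hyps m p \<and>
        \<not> (ambient m \<inter> \<Inter>p \<subseteq> \<Union>Ak) \<and>
        (\<forall>H\<in>p. card Ak - card ((\<lambda>H'. H \<inter> H') ` Ak) = k)))"

definition almost_path_adj :: "nat \<Rightarrow> nat \<Rightarrow> nat \<Rightarrow> nat \<Rightarrow> bool" where
  "almost_path_adj n k u v \<longleftrightarrow>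
     (1 \<le> u \<and> u \<le> n - 1 \<and> v = u + 1) \<or> (1 \<le> v \<and> v \<le> n - 1 \<and> u = v + 1) \<or>
     (u = k \<and> v = n + 1) \<or> (v = k \<and> u = n + 1)"

definition induced_connected :: "(nat \<Rightarrow> nat \<Rightarrow> bool) \<Rightarrow> nat set \<Rightarrow> bool" where
  "induced_connected E I \<longleftrightarrow> I \<noteq> {} \<and>
     (\<forall>u\<in>I. \<forall>v\<in>I. (u, v) \<in> {(a, b). a \<in> I \<and> b \<in> I \<and> E a b}\<^sup>*)"

definition conn_sets :: "nat \<Rightarrow> nat \<Rightarrow> nat set set" where
  "conn_sets n k = {I. I \<subseteq> {1..n+1} \<and> induced_connected (almost_path_adj n k) I}"

end

theory Submission
  imports Defs
begin


locale apg =
  fixes n k :: nat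
  assumes kpos: "1 \<le> k" and kn: "k \<le> n"
begin

abbreviation "E \<equiv> almost_path_adj n k"
abbreviation "RR I \<equiv> {(a, b). a \<in> I \<and> b \<in> I \<and> E a b}"

lemma adj_cases:
  assumes "E u v"
  shows "(v = u+1 \<and> 1 \<le> u \<and> u+1 \<le> n) \<or> (u = v+1 \<and> 1 \<le> v \<and> v+1 \<le> n) \<or> (u = k \<and> v = n+1) \<or> (v = k \<and> u = n+1)"
  using assms kn kpos unfolding almost_path_adj_def by auto

lemma adj_n1: "E x (n+1) \<Longrightarrow> x = k"
  using adj_cases[of x "n+1"] kn by auto

lemma adj_from_n1: "E (n+1) y \<Longrightarrow> y = k"
  using adj_cases[of "n+1" y] kn by auto

lemma adj_succ: "1 \<le> u \<Longrightarrow> u+1 \<le> n \<Longrightarrow> E u (u+1) \<and> E (u+1) u"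
  unfolding almost_path_adj_def by auto

lemma adj_k: "E k (n+1) \<and> E (n+1) k"
  unfolding almost_path_adj_def by auto

lemma interval_path0:
  assumes "{a..b} \<subseteq> I" "1 \<le> a" "b \<le> n" "a \<le> u" "u + d \<le> b"
  shows "(u, u+d) \<in> (RR I)\<^sup>* \<and> (u+d, u) \<in> (RR I)\<^sup>*"
  using assms(5)
proof (induction d)
  case 0 then show ?case by auto
next
  case (Suc d)
  have e: "(u+d, u+d+1) \<in> RR I" "(u+d+1, u+d) \<in> RR I"
    using adj_succ[of "u+d"] assms Suc by auto
  have ih: "(u, u+d) \<in> (RR I)\<^sup>*" "(u+d, u) \<in> (RR I)\<^sup>*" using Suc by auto
  have "(u, u+d+1) \<in> (RR I)\<^sup>*" using rtrancl.rtrancl_into_rtrancl[OF ih(1) e(1)] .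
  moreover have "(u+d+1, u) \<in> (RR I)\<^sup>*" using converse_rtrancl_into_rtrancl[OF e(2) ih(2)] .
  ultimately show ?case by simp
qed

lemma interval_path:
  assumes "{a..b} \<subseteq> I" "1 \<le> a" "b \<le> n" "a \<le> u" "u \<le> v" "v \<le> b"
  shows "(u, v) \<in> (RR I)\<^sup>* \<and> (v, u) \<in> (RR I)\<^sup>*"
proof -
  have "u + (v - u) = v" using assms by simp
  then show ?thesis using interval_path0[of a b I u "v - u"] assms by simp
qed

lemma interval_conn:
  assumes "1 \<le> a" "a \<le> b" "b \<le> n"
  shows "{a..b} \<in> conn_sets n k"
proof -
  have "\<forall>u\<in>{a..b}. \<forall>v\<in>{a..b}. (u, v) \<in> (RR {a..b})\<^sup>*"
  proof (intro ballI)
    fix u v assume "u \<in> {a..b}" "v \<in> {a..b}"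
    then show "(u, v) \<in> (RR {a..b})\<^sup>*"
      using interval_path[of a b "{a..b}" u v] interval_path[of a b "{a..b}" v u] assms
      by (cases "u \<le> v") auto
  qed
  then show ?thesis using assms unfolding conn_sets_def induced_connected_def by auto
qed

lemma single_conn: "{n+1} \<in> conn_sets n k"
  unfolding conn_sets_def induced_connected_def by auto

lemma star_conn:
  assumes "1 \<le> a" "a \<le> k" "k \<le> b" "b \<le> n"
  shows "insert (n+1) {a..b} \<in> conn_sets n k"
proof -
  let ?I = "insert (n+1) {a..b}"
  have ip: "(u, v) \<in> (RR ?I)\<^sup>*" if "u \<in> {a..b}" "v \<in> {a..b}" for u v
    using interval_path[of a b ?I u v] interval_path[of a b ?I v u] assms that
    by (cases "u \<le> v") auto
  have kk: "(k, n+1) \<in> RR ?I" "(n+1, k) \<in> RR ?I" using adj_k assms by auto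
  have "(u, v) \<in> (RR ?I)\<^sup>*" if uv: "u \<in> ?I" "v \<in> ?I" for u v
  proof -
    have k: "k \<in> {a..b}" using assms by auto
    consider "u = n+1" "v = n+1" | "u = n+1" "v \<in> {a..b}" | "u \<in> {a..b}" "v = n+1"
      | "u \<in> {a..b}" "v \<in> {a..b}" using uv by blast
    then show ?thesis
    proof cases
      case 1 then show ?thesis by auto
    next
      case 2 then show ?thesis using ip[OF k, of v] kk
        by (meson converse_rtrancl_into_rtrancl)
    next
      case 3 then show ?thesis using ip[of u k] k kk
        by (meson rtrancl.rtrancl_into_rtrancl)
    next
      case 4 then show ?thesis using ip by auto
    qed
  qed
  then show ?thesis using assms unfolding conn_sets_def induced_connected_def by auto
qed

lemma conn_sub: "I \<in> conn_sets n k \<Longrightarrow> I \<subseteq> {1..n+1}"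
  unfolding conn_sets_def by auto

lemma conn_ne: "I \<in> conn_sets n k \<Longrightarrow> I \<noteq> {}"
  unfolding conn_sets_def induced_connected_def by auto

lemma conn_path: "I \<in> conn_sets n k \<Longrightarrow> u \<in> I \<Longrightarrow> v \<in> I \<Longrightarrow> (u, v) \<in> (RR I)\<^sup>*"
  unfolding conn_sets_def induced_connected_def by auto

lemma conv:
  assumes I: "I \<in> conn_sets n k" and u: "u \<in> I" and v: "v \<in> I"
    and w: "u \<le> w" "w \<le> v" and vn: "v \<le> n"
  shows "w \<in> I"
proof (rule ccontr)
  assume wI: "w \<notin> I"
  have p: "(u, v) \<in> (RR I)\<^sup>*" using conn_path[OF I u v] .
  have p2: "(v, u) \<in> (RR I)\<^sup>*" using conn_path[OF I v u] .
  have uw: "u < w" using w wI u by (cases "u = w") auto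
  have wv: "w < v" using w wI v by (cases "w = v") auto
  show False
  proof (cases "k \<le> w")
    case True
    have "\<And>x. (u, x) \<in> (RR I)\<^sup>* \<Longrightarrow> x < w \<or> x = n+1"
    proof -
      fix x assume "(u, x) \<in> (RR I)\<^sup>*"
      then show "x < w \<or> x = n+1"
      proof (induction rule: rtrancl_induct)
        case base then show ?case using uw by auto
      next
        case (step y z)
        then have yz: "y \<in> I" "z \<in> I" "E y z" by auto
        have "z \<noteq> w" using yz wI by auto
        from adj_cases[OF yz(3)] show ?case
        proof (elim disjE conjE)
          assume "z = y+1" "1 \<le> y" "y+1 \<le> n" then show ?thesis using step.IH \<open>z \<noteq> w\<close> by linarith
        next
          assume "y = z+1" "1 \<le> z" "z+1 \<le> n" then show ?thesis using step.IH by linarith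
        next
          assume "y = k" "z = n+1" then show ?thesis by simp
        next
          assume "z = k" "y = n+1" then show ?thesis using True \<open>z \<noteq> w\<close> by linarith
        qed
      qed
    qed
    from this[OF p] show False using wv vn by auto
  next
    case False
    have "\<And>x. (v, x) \<in> (RR I)\<^sup>* \<Longrightarrow> x > w \<or> x = n+1"
    proof -
      fix x assume "(v, x) \<in> (RR I)\<^sup>*"
      then show "x > w \<or> x = n+1"
      proof (induction rule: rtrancl_induct)
        case base then show ?case using wv by auto
      next
        case (step y z)
        then have yz: "y \<in> I" "z \<in> I" "E y z" by auto
        have "z \<noteq> w" using yz wI by auto
        from adj_cases[OF yz(3)] show ?case
        proof (elim disjE conjE)
          assume "z = y+1" "1 \<le> y" "y+1 \<le> n" then show ?thesis using step.IH by linarith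
        next
          assume "y = z+1" "1 \<le> z" "z+1 \<le> n" then show ?thesis using step.IH \<open>z \<noteq> w\<close> by linarith
        next
          assume "y = k" "z = n+1" then show ?thesis by simp
        next
          assume "z = k" "y = n+1" then show ?thesis using False by linarith
        qed
      qed
    qed
    from this[OF p2] show False using uw wv vn by auto
  qed
qed

lemma k_in:
  assumes I: "I \<in> conn_sets n k" and "n+1 \<in> I" "u \<in> I" "u \<noteq> n+1"
  shows "k \<in> I"
proof -
  have "\<And>x. (u, x) \<in> (RR I)\<^sup>* \<Longrightarrow> x \<noteq> n+1 \<or> k \<in> I"
  proof -
    fix x assume "(u, x) \<in> (RR I)\<^sup>*"
    then show "x \<noteq> n+1 \<or> k \<in> I"
    proof (induction rule: rtrancl_induct)
      case base then show ?case using assms by auto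
    next
      case (step y z)
      then show ?case using adj_n1[of y] by auto
    qed
  qed
  from this[OF conn_path[OF I assms(3,2)]] show ?thesis by auto
qed


lemma conn_cases:
  assumes I: "I \<in> conn_sets n k"
  shows "(\<exists>a b. 1 \<le> a \<and> a \<le> b \<and> b \<le> n \<and> I = {a..b}) \<or> I = {n+1} \<or>
         (\<exists>a b. 1 \<le> a \<and> a \<le> k \<and> k \<le> b \<and> b \<le> n \<and> I = insert (n+1) {a..b})"
proof -
  have sub: "I \<subseteq> {1..n+1}" using conn_sub[OF I] .
  have fin: "finite I" using sub finite_subset by blast
  show ?thesis
  proof (cases "n+1 \<in> I")
    case False
    have ne: "I \<noteq> {}" using conn_ne[OF I] .
    define a where "a = Min I"
    define b where "b = Max I"
    have aI: "a \<in> I" "b \<in> I" using ne fin a_def b_def by auto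
    have sub2: "I \<subseteq> {1..n}"
    proof
      fix x assume "x \<in> I" then show "x \<in> {1..n}" using sub False by (cases "x = n+1") auto
    qed
    have "I = {a..b}"
    proof
      show "I \<subseteq> {a..b}" using fin a_def b_def by auto
      show "{a..b} \<subseteq> I"
      proof
        fix w assume "w \<in> {a..b}"
        then show "w \<in> I" using conv[OF I aI(1) aI(2)] aI sub2 by auto
      qed
    qed
    then have "1 \<le> a \<and> a \<le> b \<and> b \<le> n \<and> I = {a..b}" using aI sub2 by auto
    then show ?thesis by blast
  next
    case True
    show ?thesis
    proof (cases "I = {n+1}")
      case True then show ?thesis by blast
    next
      case F: False
      define J where "J = I - {n+1}"
      have neJ: "J \<noteq> {}" using F True J_def by auto
      have finJ: "finite J" using fin J_def by auto
      have subJ: "J \<subseteq> {1..n}"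
      proof
        fix x assume "x \<in> J" then show "x \<in> {1..n}" using sub J_def by (cases "x = n+1") auto
      qed
      define a where "a = Min J"
      define b where "b = Max J"
      have aJ: "a \<in> J" "b \<in> J" using neJ finJ a_def b_def by auto
      have kI: "k \<in> I" using k_in[OF I True, of a] aJ J_def by auto
      have kJ: "k \<in> J" using kI kn J_def by auto
      have "J = {a..b}"
      proof
        show "J \<subseteq> {a..b}" using finJ a_def b_def by auto
        show "{a..b} \<subseteq> J"
        proof
          fix w assume w: "w \<in> {a..b}"
          have "w \<in> I" using conv[OF I, of a b w] aJ subJ J_def w by auto
          then show "w \<in> J" using w aJ subJ J_def by auto
        qed
      qed
      then have "1 \<le> a \<and> a \<le> k \<and> k \<le> b \<and> b \<le> n \<and> I = insert (n+1) {a..b}"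
        using aJ subJ kJ J_def True by auto
      then show ?thesis by blast
    qed
  qed
qed

lemma conn_iff:
  "I \<in> conn_sets n k \<longleftrightarrow>
    ((\<exists>a b. 1 \<le> a \<and> a \<le> b \<and> b \<le> n \<and> I = {a..b}) \<or> I = {n+1} \<or>
         (\<exists>a b. 1 \<le> a \<and> a \<le> k \<and> k \<le> b \<and> b \<le> n \<and> I = insert (n+1) {a..b}))"
  using conn_cases interval_conn single_conn star_conn by blast

lemma conn_fin: "I \<in> conn_sets n k \<Longrightarrow> finite I"
  using conn_sub finite_subset by blast

lemma shrink:
  assumes I: "I \<in> conn_sets n k" and u: "1 \<le> u" "u \<le> card I"
  shows "\<exists>J \<in> conn_sets n k. J \<subseteq> I \<and> card J = u"
  using conn_cases[OF I]
proof (elim disjE exE conjE)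
  fix a b assume h: "1 \<le> a" "a \<le> b" "b \<le> n" "I = {a..b}"
  have "{a..a+u-1} \<in> conn_sets n k" using interval_conn[of a "a+u-1"] h u by auto
  moreover have "{a..a+u-1} \<subseteq> I" "card {a..a+u-1} = u" using h u by auto
  ultimately show ?thesis by blast
next
  assume "I = {n+1}" then show ?thesis using I u by auto
next
  fix a b assume h: "1 \<le> a" "a \<le> k" "k \<le> b" "b \<le> n" "I = insert (n+1) {a..b}"
  have cI: "card I = b + 2 - a" using h by auto
  show ?thesis
  proof (cases "u = card I")
    case True then show ?thesis using I by auto
  next
    case False
    have "{a..a+u-1} \<in> conn_sets n k" using interval_conn[of a "a+u-1"] h u False cI by auto
    moreover have "{a..a+u-1} \<subseteq> I" "card {a..a+u-1} = u" using h u False cI by auto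
    ultimately show ?thesis by blast
  qed
qed

end




definition dlt :: "nat \<Rightarrow> nat \<Rightarrow> rat" where "dlt q = (\<lambda>i. if i = q then 1 else 0)"

lemma sum_dlt: "finite S \<Longrightarrow> (\<Sum>i\<in>S. dlt q i) = (if q \<in> S then 1 else 0)"
  unfolding dlt_def by (simp add: sum.delta)

lemma dlt_amb: "q \<in> {1..m} \<Longrightarrow> dlt q \<in> ambient m"
  unfolding dlt_def ambient_def by auto

lemma amb_diff: "x \<in> ambient m \<Longrightarrow> y \<in> ambient m \<Longrightarrow> (\<lambda>i. x i - y i) \<in> ambient m"
  unfolding ambient_def by auto

lemma H_of_mem: "x \<in> H_of m S \<longleftrightarrow> x \<in> ambient m \<and> (\<Sum>i\<in>S. x i) = 0"
  unfolding H_of_def by auto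

lemma H_inj:
  assumes "I \<subseteq> {1..m}" "J \<subseteq> {1..m}" "I \<noteq> J"
  shows "H_of m I \<noteq> H_of m J"
proof -
  have fin: "finite I" "finite J" using assms finite_subset[of _ "{1..m}"] by auto
  obtain p where p: "(p \<in> I \<and> p \<notin> J) \<or> (p \<in> J \<and> p \<notin> I)" using assms(3) by blast
  have pm: "p \<in> {1..m}" using p assms by auto
  show ?thesis
  proof
    assume eq: "H_of m I = H_of m J"
    have a: "dlt p \<in> ambient m" using dlt_amb[OF pm] .
    from p show False
    proof
      assume "p \<in> I \<and> p \<notin> J"
      then have "dlt p \<in> H_of m J" "dlt p \<notin> H_of m I" using a fin by (auto simp: H_of_mem sum_dlt)
      then show False using eq by simp
    next
      assume "p \<in> J \<and> p \<notin> I"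
      then have "dlt p \<in> H_of m I" "dlt p \<notin> H_of m J" using a fin by (auto simp: H_of_mem sum_dlt)
      then show False using eq by simp
    qed
  qed
qed

lemma split_lemma:
  assumes sub: "I \<subseteq> {1..m}" "J \<subseteq> {1..m}" "J' \<subseteq> {1..m}"
    and cJ: "card J < card I" and cJ': "card J' < card I"
    and H: "H_of m I \<inter> H_of m J \<subseteq> H_of m J'"
    and p: "p \<in> J'" "p \<notin> J"
  shows "J \<inter> J' = {} \<and> J \<union> J' = I"
proof -
  have fin: "finite I" "finite J" "finite J'" using sub finite_subset[of _ "{1..m}"] by auto
  note sd = sum_dlt[OF fin(1)] sum_dlt[OF fin(2)] sum_dlt[OF fin(3)]
  have F1: "q \<in> I \<or> q \<in> J" if "q \<in> J'" for q
  proof (rule ccontr)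
    assume nq: "\<not> (q \<in> I \<or> q \<in> J)"
    have "dlt q \<in> ambient m" using dlt_amb that sub by auto
    then have "dlt q \<in> H_of m I \<inter> H_of m J" using nq by (simp add: H_of_mem sd)
    then have "dlt q \<in> H_of m J'" using H by auto
    then show False using that by (simp add: H_of_mem sd)
  qed
  have F2: "q' \<in> J'" if "q \<in> J'" "(q \<in> I) = (q' \<in> I)" "(q \<in> J) = (q' \<in> J)" "q' \<in> {1..m}" "q \<in> {1..m}" for q q'
  proof (rule ccontr)
    assume nq: "q' \<notin> J'"
    let ?x = "\<lambda>i. dlt q i - dlt q' i"
    have "?x \<in> ambient m" using dlt_amb that amb_diff by blast
    then have "?x \<in> H_of m I \<inter> H_of m J" using that by (simp add: H_of_mem sd sum_subtractf)
    then have "?x \<in> H_of m J'" using H by auto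
    then show False using that nq by (simp add: H_of_mem sd sum_subtractf)
  qed
  have F4: "a \<in> J'" if "a \<in> I" "a \<in> J" "c \<in> J" "c \<notin> I" "p \<in> I" for a c
  proof (rule ccontr)
    assume na: "a \<notin> J'"
    let ?x = "\<lambda>i. dlt a i - dlt p i - dlt c i"
    have "?x \<in> ambient m" using dlt_amb that amb_diff sub p by (meson subsetD)
    then have "?x \<in> H_of m I \<inter> H_of m J" using that p by (simp add: H_of_mem sd sum_subtractf)
    then have "?x \<in> H_of m J'" using H by auto
    then show False using that p na by (simp add: H_of_mem sd sum_subtractf split: if_splits)
  qed
  have pI: "p \<in> I" using F1 p by auto
  have B: "I - J \<subseteq> J'"
  proof
    fix x assume x: "x \<in> I - J"
    have "x \<in> {1..m}" "p \<in> {1..m}" using x pI sub by auto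
    then show "x \<in> J'" by (rule F2[of p x, rotated 3]) (use p pI x in auto)
  qed
  have notsub: "\<not> I \<subseteq> J'"
  proof
    assume "I \<subseteq> J'"
    then have "card I \<le> card J'" by (rule card_mono[OF fin(3)])
    then show False using cJ' by simp
  qed
  have A: "I \<inter> J \<inter> J' = {}"
  proof (rule ccontr)
    assume "I \<inter> J \<inter> J' \<noteq> {}"
    then obtain a where a: "a \<in> I" "a \<in> J" "a \<in> J'" by auto
    have "I \<inter> J \<subseteq> J'"
    proof
      fix x assume x: "x \<in> I \<inter> J"
      have "x \<in> {1..m}" "a \<in> {1..m}" using x a sub by auto
      then show "x \<in> J'" by (rule F2[of a x, rotated 3]) (use a x in auto)
    qed
    then show False using B notsub by blast
  qed
  have Ane: "I \<inter> J \<noteq> {}" using B notsub by blast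
  then obtain a where a: "a \<in> I" "a \<in> J" by auto
  have C: "J \<subseteq> I"
  proof
    fix c assume "c \<in> J"
    show "c \<in> I"
    proof (rule ccontr)
      assume "c \<notin> I"
      then have "a \<in> J'" using F4[of a c] a \<open>c \<in> J\<close> pI by auto
      then show False using A a by auto
    qed
  qed
  have "J \<inter> J' = {}" using A C by auto
  moreover have "J \<union> J' = I" using F1 B C by auto
  ultimately show ?thesis by simp
qed

lemma split_eq:
  assumes sub: "I \<subseteq> {1..m}" and "J \<inter> J' = {}" "J \<union> J' = I"
  shows "H_of m I \<inter> H_of m J = H_of m I \<inter> H_of m J'"
proof -
  have fin: "finite J" "finite J'" using assms finite_subset[of _ "{1..m}"] by auto
  have "(\<Sum>i\<in>I. x i) = (\<Sum>i\<in>J. x i) + (\<Sum>i\<in>J'. x i)" for x :: "nat \<Rightarrow> rat"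
    using sum.union_disjoint[OF fin, of x] assms by simp
  then show ?thesis unfolding H_of_def by auto
qed




definition cnt :: "nat \<Rightarrow> nat \<Rightarrow> nat \<Rightarrow> nat \<Rightarrow> nat" where
  "cnt s r a b = card {j \<in> {a..b}. j mod s = r}"

lemma mod_close:
  fixes x y s :: nat
  assumes "x mod s = y mod s" "x < y + s" "y < x + s"
  shows "x = y"
proof -
  have aux: "x = y" if xy: "x \<le> y" and h: "x mod s = y mod s" "y < x + s" for x y :: nat
  proof -
    have "s dvd (y - x)" using mod_eq_dvd_iff_nat[OF xy, of s] h(1)[symmetric] by simp
    moreover have "y - x < s" using h xy by linarith
    ultimately have "y - x = 0" using dvd_imp_le by fastforce
    then show "x = y" using xy by simp
  qed
  show ?thesis
  proof (cases "x \<le> y")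
    case True then show ?thesis using aux assms by auto
  next
    case False then show ?thesis using aux[of y x] assms by auto
  qed
qed

lemma K1:
  assumes "0 < s" "b < a + s"
  shows "cnt s r a b \<le> 1"
proof -
  have "\<forall>x\<in>{j \<in> {a..b}. j mod s = r}. \<forall>y\<in>{j \<in> {a..b}. j mod s = r}. x = y"
  proof (intro ballI)
    fix x y assume "x \<in> {j \<in> {a..b}. j mod s = r}" "y \<in> {j \<in> {a..b}. j mod s = r}"
    then show "x = y" using mod_close[of x s y] assms by auto
  qed
  then show ?thesis unfolding cnt_def using card_le_Suc0_iff_eq[of "{j \<in> {a..b}. j mod s = r}"] by auto
qed

lemma K2ex:
  fixes a s r :: nat
  assumes "0 < s" "r < s"
  shows "\<exists>j. a \<le> j \<and> j < a + s \<and> j mod s = r"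
proof (cases "a mod s \<le> r")
  case True
  let ?j = "(a div s) * s + r"
  have "a = (a div s) * s + a mod s" using div_mult_mod_eq[of a s] by simp
  then have "a \<le> ?j \<and> ?j < a + s" using True assms by linarith
  moreover have "?j mod s = r" using assms by simp
  ultimately show ?thesis by blast
next
  case False
  define q where "q = a div s"
  let ?j = "q * s + s + r"
  have a: "a = q * s + a mod s" using div_mult_mod_eq[of a s] q_def by simp
  have "a mod s < s" using assms by simp
  then have "a \<le> ?j \<and> ?j < a + s" using False assms a by linarith
  moreover have e: "?j = r + (q + 1) * s" by (simp add: algebra_simps)
  have "(r + (q + 1) * s) mod s = r" by (simp only: mod_mult_self1 mod_less[OF assms(2)])
  then have "?j mod s = r" using e by (metis add.commute add.left_commute)
  ultimately show ?thesis by blast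
qed

lemma K2:
  assumes "0 < s" "r < s" "b + 1 = a + s"
  shows "cnt s r a b = 1"
proof -
  obtain j where j: "a \<le> j" "j < a + s" "j mod s = r" using K2ex assms by blast
  have "j \<in> {j \<in> {a..b}. j mod s = r}" using j assms by auto
  then have "cnt s r a b \<noteq> 0" unfolding cnt_def by auto
  moreover have "cnt s r a b \<le> 1" using K1 assms by auto
  ultimately show ?thesis by simp
qed

lemma K3:
  assumes "0 < s" "r < s" "b + 2 = a + s"
  shows "cnt s r a b = (if (b+1) mod s = r then 0 else 1)"
proof -
  have c: "cnt s r a (b+1) = 1" using K2 assms by simp
  have eq: "{j \<in> {a..b+1}. j mod s = r} = (if (b+1) mod s = r then insert (b+1) {j \<in> {a..b}. j mod s = r} else {j \<in> {a..b}. j mod s = r})"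
    using assms by (auto simp: le_Suc_eq)
  show ?thesis
  proof (cases "(b+1) mod s = r")
    case True
    then have "cnt s r a (b+1) = Suc (cnt s r a b)" unfolding cnt_def using eq by simp
    then show ?thesis using c True by simp
  next
    case False
    then have "cnt s r a (b+1) = cnt s r a b" unfolding cnt_def using eq by simp
    then show ?thesis using c False by simp
  qed
qed

lemma sum_if_card:
  assumes "finite T"
  shows "(\<Sum>j\<in>T. if P j then (\<alpha>::rat) else \<beta>) = \<beta> * of_nat (card T) + (\<alpha> - \<beta>) * of_nat (card {j\<in>T. P j})"
proof -
  have "(\<Sum>j\<in>T. if P j then \<alpha> else \<beta>) = (\<Sum>j\<in>T. \<beta> + (if P j then \<alpha> - \<beta> else 0))"
    by (rule sum.cong) auto
  also have "\<dots> = \<beta> * of_nat (card T) + (\<Sum>j\<in>T. if P j then \<alpha> - \<beta> else 0)"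
    by (simp add: sum.distrib)
  also have "(\<Sum>j\<in>T. if P j then \<alpha> - \<beta> else 0) = (\<Sum>j\<in>{j\<in>T. P j}. \<alpha> - \<beta>)"
    using sum.inter_filter[OF assms, of "\<lambda>_. \<alpha> - \<beta>" P] by simp
  finally show ?thesis by simp
qed




lemma Min_icc[simp]: "(a::nat) \<le> b \<Longrightarrow> Min {a..b} = a"
  by (rule Min_eqI) auto

lemma Max_icc[simp]: "(a::nat) \<le> b \<Longrightarrow> Max {a..b} = b"
  by (rule Max_eqI) auto

definition ind :: "nat set \<Rightarrow> nat \<Rightarrow> rat" where "ind I = (\<lambda>j. if j \<in> I then 1 else 0)"

lemma pairing:
  assumes "finite B" "finite M" "\<forall>I\<in>B. I \<subseteq> M"
  shows "(\<Sum>j\<in>M. (\<Sum>I\<in>B. d I * ind I j) * w j) = (\<Sum>I\<in>B. d I * (\<Sum>j\<in>I. w j))"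
proof -
  have "(\<Sum>j\<in>M. (\<Sum>I\<in>B. d I * ind I j) * w j) = (\<Sum>j\<in>M. \<Sum>I\<in>B. d I * (ind I j * w j))"
    by (simp add: sum_distrib_right mult.assoc)
  also have "\<dots> = (\<Sum>I\<in>B. \<Sum>j\<in>M. d I * (ind I j * w j))" by (rule sum.swap)
  also have "\<dots> = (\<Sum>I\<in>B. d I * (\<Sum>j\<in>I. w j))"
  proof (rule sum.cong)
    fix I assume I: "I \<in> B"
    have "(\<Sum>j\<in>M. ind I j * w j) = (\<Sum>j\<in>M. if j \<in> I then w j else 0)"
      unfolding ind_def by (rule sum.cong) auto
    also have "\<dots> = (\<Sum>j\<in>{j \<in> M. j \<in> I}. w j)" using sum.inter_filter[OF assms(2), of w "\<lambda>j. j \<in> I"] by simp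
    also have "{j \<in> M. j \<in> I} = I" using assms(3) I by auto
    finally show "(\<Sum>j\<in>M. d I * (ind I j * w j)) = d I * (\<Sum>j\<in>I. w j)"
      by (simp add: sum_distrib_left[symmetric])
  qed simp
  finally show ?thesis .
qed

context apg begin

definition wv :: "nat \<Rightarrow> nat \<Rightarrow> nat \<Rightarrow> rat" where
  "wv s r j = (if 1 \<le> j \<and> j \<le> n then (if j mod s = r then of_nat s else 0) else 0) - (if 1 \<le> j \<and> j \<le> n + 1 then 1 else 0)"

lemma wv_interval:
  assumes "1 \<le> a" "b \<le> n"
  shows "(\<Sum>j\<in>{a..b}. wv s r j) = of_nat s * of_nat (cnt s r a b) - of_nat (card {a..b})"
proof -
  have "(\<Sum>j\<in>{a..b}. wv s r j) = (\<Sum>j\<in>{a..b}. if j mod s = r then of_nat s - 1 else - 1)"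
    unfolding wv_def by (rule sum.cong) (use assms in auto)
  also have "\<dots> = - of_nat (card {a..b}) + of_nat s * of_nat (cnt s r a b)"
    unfolding cnt_def by (subst sum_if_card) (auto simp: algebra_simps)
  finally show ?thesis by simp
qed

lemma wv_n1: "wv s r (n+1) = -1"
  unfolding wv_def by simp

lemma wv_star:
  assumes "1 \<le> a" "b \<le> n"
  shows "(\<Sum>j\<in>insert (n+1) {a..b}. wv s r j) = of_nat s * of_nat (cnt s r a b) - of_nat (card {a..b}) - 1"
proof -
  have "n + 1 \<notin> {a..b}" using assms by auto
  then have "(\<Sum>j\<in>insert (n+1) {a..b}. wv s r j) = wv s r (n+1) + (\<Sum>j\<in>{a..b}. wv s r j)" by simp
  then show ?thesis using wv_interval[OF assms] wv_n1 by simp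
qed

lemma conn_fam_fin: "finite (conn_sets n k)"
proof -
  have "conn_sets n k \<subseteq> Pow {1..n+1}" using conn_sub by auto
  then show ?thesis using finite_subset by (metis finite_Pow_iff finite_atLeastAtMost)
qed

lemma indep_family:
  assumes s: "1 \<le> s" and B: "B \<subseteq> {I \<in> conn_sets n k. card I = s}"
    and eq: "\<forall>j\<in>{1..n+1}. (\<Sum>I\<in>B. d I * ind I j) = 0"
  shows "\<forall>I\<in>B. d I = 0"
proof -
  have "B \<subseteq> conn_sets n k" using B by auto
  then have finB: "finite B" using conn_fam_fin by (rule finite_subset)
  have BM: "\<forall>I\<in>B. I \<subseteq> {1..n+1}" using B conn_sub by blast
  have pair0: "(\<Sum>I\<in>B. d I * (\<Sum>j\<in>I. w j)) = 0" for w
  proof -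
    have "(\<Sum>j\<in>{1..n+1}. (\<Sum>I\<in>B. d I * ind I j) * w j) = 0" using eq by simp
    then show ?thesis using pairing[OF finB _ BM] by simp
  qed
  have star0: "d I = 0" if I: "I \<in> B" "n+1 \<in> I" for I
  proof -
    obtain r where r: "r < s" and rw: "\<And>J. J \<in> B \<Longrightarrow> (\<Sum>j\<in>J. wv s r j) = (if J = I then - of_nat s else 0)"
    proof -
      have Ic: "I \<in> conn_sets n k" "card I = s" using I B by auto
      from conn_cases[OF Ic(1)] consider "I = {n+1}"
        | a b where "1 \<le> a" "a \<le> k" "k \<le> b" "b \<le> n" "I = insert (n+1) {a..b}"
        using I by (auto simp: atLeastAtMost_iff)
      then show ?thesis
      proof cases
        case 1
        then have s1: "s = 1" using Ic by simp
        have "(\<Sum>j\<in>J. wv s 0 j) = (if J = I then - of_nat s else 0)" if J: "J \<in> B" for J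
        proof -
          have Jc: "J \<in> conn_sets n k" "card J = s" using J B by auto
          from conn_cases[OF Jc(1)] show ?thesis
          proof (elim disjE exE conjE)
            fix a' b' assume h: "1 \<le> a'" "a' \<le> b'" "b' \<le> n" "J = {a'..b'}"
            have "cnt s 0 a' b' = 1" using K2[of s 0 b' a'] s h Jc by simp
            then show ?thesis using h wv_interval[of a' b' s 0] Jc 1 by auto
          next
            assume "J = {n+1}" then show ?thesis using 1 wv_n1 s1 by simp
          next
            fix a' b' assume h: "1 \<le> a'" "a' \<le> k" "k \<le> b'" "b' \<le> n" "J = insert (n+1) {a'..b'}"
            have "card J = b' + 2 - a'" using h by auto
            then show ?thesis using s1 Jc h by simp
          qed
        qed
        then show ?thesis using that[of 0] s1 by simp
      next
        case 2
        note ab = 2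
        have cI: "card I = b + 2 - a" using ab by auto
        have s2: "s = b + 2 - a" using cI Ic by simp
        let ?r = "(b+1) mod s"
        have rs: "?r < s" using s by simp
        have "(\<Sum>j\<in>J. wv s ?r j) = (if J = I then - of_nat s else 0)" if J: "J \<in> B" for J
        proof -
          have Jc: "J \<in> conn_sets n k" "card J = s" using J B by auto
          from conn_cases[OF Jc(1)] show ?thesis
          proof (elim disjE exE conjE)
            fix a' b' assume h: "1 \<le> a'" "a' \<le> b'" "b' \<le> n" "J = {a'..b'}"
            have "cnt s ?r a' b' = 1" using K2[of s ?r b' a'] s h Jc by simp
            moreover have "n+1 \<notin> J" using h by auto
            then have "J \<noteq> I" using ab by auto
            ultimately show ?thesis using h wv_interval[of a' b' s ?r] Jc by auto
          next
            assume "J = {n+1}" then show ?thesis using Jc s2 ab by simp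
          next
            fix a' b' assume h: "1 \<le> a'" "a' \<le> k" "k \<le> b'" "b' \<le> n" "J = insert (n+1) {a'..b'}"
            have cJ: "card J = b' + 2 - a'" using h by auto
            have c: "cnt s ?r a' b' = (if (b'+1) mod s = ?r then 0 else 1)"
              using K3[of s ?r b' a'] s cJ Jc rs by simp
            have iff: "(b'+1) mod s = ?r \<longleftrightarrow> J = I"
            proof
              assume "(b'+1) mod s = ?r"
              moreover have "b' + 1 < b + 1 + s" "b + 1 < b' + 1 + s" using cJ Jc s2 ab h by linarith+
              ultimately have "b' + 1 = b + 1" using mod_close[of "b'+1" s "b+1"] by blast
              then have bb: "b' = b" by simp
              then have "a' = a" using cJ Jc s2 ab h by linarith
              then show "J = I" using bb h ab by simp
            next
              assume JI: "J = I"
              have "{a'..b'} = J - {n+1}" "{a..b} = I - {n+1}" using h ab by auto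
              then have "{a'..b'} = {a..b}" using JI by simp
              then have "b' = b" using h ab by (simp add: Icc_eq_Icc)
              then show "(b'+1) mod s = ?r" by simp
            qed
            have sJ: "(\<Sum>j\<in>J. wv s ?r j) = of_nat s * of_nat (cnt s ?r a' b') - of_nat (card {a'..b'}) - 1"
              using wv_star[of a' b' s ?r] h by simp
            have "card {a'..b'} + 1 = s" using cJ Jc h by auto
            then have cr: "(of_nat (card {a'..b'}) :: rat) = of_nat s - 1" by (metis add_diff_cancel_right' of_nat_1 of_nat_add)
            show ?thesis
            proof (cases "J = I")
              case True
              then have "cnt s ?r a' b' = 0" using c iff by simp
              then show ?thesis using sJ cr True by simp
            next
              case False
              then have "cnt s ?r a' b' = 1" using c iff by simp
              then show ?thesis using sJ cr False by simp
            qed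
          qed
        qed
        then show ?thesis using that[OF rs] by simp
      qed
    qed
    have "(\<Sum>J\<in>B. d J * (\<Sum>j\<in>J. wv s r j)) = (\<Sum>J\<in>B. if J = I then d I * - of_nat s else 0)"
      by (rule sum.cong) (auto simp: rw)
    also have "\<dots> = d I * - of_nat s" using finB I by (simp add: sum.delta)
    finally show "d I = 0" using pair0[of "wv s r"] s by simp
  qed
  have iv0: "\<forall>I\<in>B. n+1 \<notin> I \<longrightarrow> Min I = a \<longrightarrow> d I = 0" for a
  proof (induction a rule: less_induct)
    case (less a)
    show ?case
    proof (intro ballI impI)
      fix I assume I: "I \<in> B" "n+1 \<notin> I" "Min I = a"
      have Ic: "I \<in> conn_sets n k" "card I = s" using I B by auto
      obtain a0 b where ab0: "1 \<le> a0" "a0 \<le> b" "b \<le> n" "I = {a0..b}"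
        using conn_cases[OF Ic(1)] I(2) by auto
      have "a0 = a" using ab0 I(3) by simp
      then have ab: "1 \<le> a" "a \<le> b" "b \<le> n" "I = {a..b}" using ab0 by auto
      have "(\<Sum>J\<in>B. d J * ind J a) = (\<Sum>J\<in>B. if J = I then d I else 0)"
      proof (rule sum.cong)
        fix J assume J: "J \<in> B"
        have Jc: "J \<in> conn_sets n k" "card J = s" using J B by auto
        show "d J * ind J a = (if J = I then d I else 0)"
        proof (cases "J = I")
          case True then show ?thesis using ab by (simp add: ind_def)
        next
          case False
          show ?thesis
          proof (cases "a \<in> J")
            case False then show ?thesis using \<open>J \<noteq> I\<close> by (simp add: ind_def)
          next
            case True
            show ?thesis
            proof (cases "n+1 \<in> J")
              case True then show ?thesis using star0 J \<open>J \<noteq> I\<close> by simp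
            next
              case False
              obtain a' b' where h: "1 \<le> a'" "a' \<le> b'" "b' \<le> n" "J = {a'..b'}"
                using conn_cases[OF Jc(1)] False by auto
              have "a' \<noteq> a"
              proof
                assume "a' = a"
                then have "b' = b" using Jc Ic h ab by auto
                then show False using \<open>a' = a\<close> h ab \<open>J \<noteq> I\<close> by simp
              qed
              then have "a' < a" using True h by auto
              moreover have "Min J = a'" using h by simp
              ultimately have "d J = 0" using less J False by blast
              then show ?thesis using \<open>J \<noteq> I\<close> by simp
            qed
          qed
        qed
      qed simp
      also have "\<dots> = d I" using finB I by (simp add: sum.delta)
      finally show "d I = 0" using eq ab by simp
    qed
  qed
  show ?thesis
  proof
    fix I assume I: "I \<in> B"
    show "d I = 0"
    proof (cases "n+1 \<in> I")
      case True then show ?thesis using star0 I by simp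
    next
      case False then show ?thesis using iv0[of "Min I"] I by blast
    qed
  qed
qed

end



context apg begin

definition xv :: "nat \<Rightarrow> nat \<Rightarrow> rat" where
  "xv s j = (if 1 \<le> j \<and> j \<le> n then (if j mod s = k mod s then 1 - of_nat s else 1) else if j = n+1 then 1 else 0)"

lemma xv_interval:
  assumes "1 \<le> a" "b \<le> n"
  shows "(\<Sum>j\<in>{a..b}. xv s j) = of_nat (card {a..b}) - of_nat s * of_nat (cnt s (k mod s) a b)"
proof -
  have "(\<Sum>j\<in>{a..b}. xv s j) = (\<Sum>j\<in>{a..b}. if j mod s = k mod s then 1 - of_nat s else 1)"
    unfolding xv_def by (rule sum.cong) (use assms in auto)
  also have "\<dots> = of_nat (card {a..b}) - of_nat s * of_nat (cnt s (k mod s) a b)"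
    unfolding cnt_def by (subst sum_if_card) (auto simp: algebra_simps)
  finally show ?thesis .
qed

lemma xv_star:
  assumes "1 \<le> a" "b \<le> n"
  shows "(\<Sum>j\<in>insert (n+1) {a..b}. xv s j) = 1 + of_nat (card {a..b}) - of_nat s * of_nat (cnt s (k mod s) a b)"
proof -
  have "n + 1 \<notin> {a..b}" using assms by auto
  then have "(\<Sum>j\<in>insert (n+1) {a..b}. xv s j) = xv s (n+1) + (\<Sum>j\<in>{a..b}. xv s j)" by simp
  moreover have "xv s (n+1) = 1" unfolding xv_def by simp
  ultimately show ?thesis using xv_interval[OF assms] by simp
qed

lemma xv_amb: "xv s \<in> ambient (n+1)"
  unfolding ambient_def xv_def by auto

lemma cond2_vec:
  assumes s: "2 \<le> s" and I: "I \<in> conn_sets n k" and cI: "card I \<le> s"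
  shows "(\<Sum>j\<in>I. xv s j) = 0 \<longleftrightarrow> card I = s"
  using conn_cases[OF I]
proof (elim disjE exE conjE)
  fix a b assume h: "1 \<le> a" "a \<le> b" "b \<le> n" "I = {a..b}"
  have c1: "cnt s (k mod s) a b \<le> 1" using K1[of s b a] s h cI by auto
  have sm: "(\<Sum>j\<in>I. xv s j) = of_nat (card {a..b}) - of_nat s * of_nat (cnt s (k mod s) a b)"
    using xv_interval h by simp
  show ?thesis
  proof (cases "card I = s")
    case True
    then have "cnt s (k mod s) a b = 1" using K2[of s "k mod s" b a] s h by auto
    then show ?thesis using sm True h by simp
  next
    case False
    have L: "1 \<le> card {a..b}" "card {a..b} < s" using h False cI by auto
    show ?thesis
    proof (cases "cnt s (k mod s) a b = 0")
      case True then show ?thesis using sm L False by simp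
    next
      case F2: False
      then have "cnt s (k mod s) a b = 1" using c1 by simp
      then have "(\<Sum>j\<in>I. xv s j) = of_nat (card {a..b}) - of_nat s" using sm by simp
      moreover have "(of_nat (card {a..b}) :: rat) \<noteq> of_nat s" using L by simp
      ultimately show ?thesis using False by simp
    qed
  qed
next
  assume "I = {n+1}"
  then show ?thesis using s by (simp add: xv_def)
next
  fix a b assume h: "1 \<le> a" "a \<le> k" "k \<le> b" "b \<le> n" "I = insert (n+1) {a..b}"
  have cI': "card I = card {a..b} + 1" using h by auto
  have c1: "cnt s (k mod s) a b \<le> 1" using K1[of s b a] s h cI cI' by auto
  have "k \<in> {j \<in> {a..b}. j mod s = k mod s}" using h by auto
  then have "cnt s (k mod s) a b \<noteq> 0" unfolding cnt_def by auto
  then have c: "cnt s (k mod s) a b = 1" using c1 by simp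
  have sm: "(\<Sum>j\<in>I. xv s j) = 1 + of_nat (card {a..b}) - of_nat s"
    using xv_star[of a b s] h c by simp
  have "(1 + of_nat (card {a..b}) - of_nat s = (0::rat)) \<longleftrightarrow> card {a..b} + 1 = s"
  proof -
    have "(1 + of_nat (card {a..b}) - of_nat s = (0::rat)) \<longleftrightarrow> (of_nat (card {a..b} + 1) = (of_nat s :: rat))"
      by (simp add: algebra_simps)
    also have "\<dots> \<longleftrightarrow> card {a..b} + 1 = s" by (rule of_nat_eq_iff)
    finally show ?thesis .
  qed
  then show ?thesis using sm cI' by simp
qed

end



context apg begin

definition rI :: "nat set \<Rightarrow> nat" where "rI I = (if n+1 \<in> I then n+1 else Max I)"

definition SP :: "nat set \<Rightarrow> nat set set" where
  "SP I = {J \<in> conn_sets n k. J \<subseteq> I \<and> rI I \<notin> J \<and> I - J \<in> conn_sets n k}"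

lemma rI_in: "I \<in> conn_sets n k \<Longrightarrow> rI I \<in> I"
  unfolding rI_def using conn_fin conn_ne by auto

lemma SP_interval:
  assumes h: "1 \<le> a" "a \<le> b" "b \<le> n"
  shows "SP {a..b} = (\<lambda>c. {a..c}) ` {a..<b}"
proof
  have r: "rI {a..b} = b" unfolding rI_def using h by auto
  show "SP {a..b} \<subseteq> (\<lambda>c. {a..c}) ` {a..<b}"
  proof
    fix J assume J: "J \<in> SP {a..b}"
    then have Jc: "J \<in> conn_sets n k" "J \<subseteq> {a..b}" "b \<notin> J" "{a..b} - J \<in> conn_sets n k"
      unfolding SP_def r by auto
    have "n+1 \<notin> J" using Jc h by auto
    then obtain x y where xy: "1 \<le> x" "x \<le> y" "y \<le> n" "J = {x..y}" using conn_cases[OF Jc(1)] by auto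
    have "x = a"
    proof (rule ccontr)
      assume "x \<noteq> a"
      then have "a \<in> {a..b} - J" "b \<in> {a..b} - J" using xy Jc h by auto
      then have "x \<in> {a..b} - J" using conv[OF Jc(4), of a b x] xy Jc h by auto
      then show False using xy by auto
    qed
    moreover have "y < b" using xy Jc by auto
    ultimately show "J \<in> (\<lambda>c. {a..c}) ` {a..<b}" using xy by auto
  qed
  show "(\<lambda>c. {a..c}) ` {a..<b} \<subseteq> SP {a..b}"
  proof
    fix J assume "J \<in> (\<lambda>c. {a..c}) ` {a..<b}"
    then obtain c where c: "a \<le> c" "c < b" "J = {a..c}" by auto
    have "{a..b} - J = {c+1..b}" using c by auto
    moreover have "{c+1..b} \<in> conn_sets n k" using interval_conn[of "c+1" b] c h by auto
    moreover have "J \<in> conn_sets n k" using interval_conn[of a c] c h by auto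
    ultimately show "J \<in> SP {a..b}" unfolding SP_def r using c by auto
  qed
qed

lemma card_SP_interval:
  assumes h: "1 \<le> a" "a \<le> b" "b \<le> n"
  shows "card (SP {a..b}) = card {a..b} - 1"
proof -
  have "inj_on (\<lambda>c. {a..c}) {a..<b}" by (rule inj_onI) (auto simp: Icc_eq_Icc)
  then have "card ((\<lambda>c. {a..c}) ` {a..<b}) = b - a" by (simp add: card_image)
  then show ?thesis using SP_interval[OF h] h by simp
qed

lemma SP_single: "SP {n+1} = {}"
  unfolding SP_def rI_def using conn_ne by auto

lemma SP_star:
  assumes h: "1 \<le> a" "a \<le> k" "k \<le> b" "b \<le> n"
  shows "SP (insert (n+1) {a..b}) = (\<lambda>c. {a..c}) ` {a..<k} \<union> (\<lambda>c. {c..b}) ` {k<..b} \<union> {{a..b}}"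
proof
  let ?I = "insert (n+1) {a..b}"
  have r: "rI ?I = n+1" unfolding rI_def by auto
  have nab: "n+1 \<notin> {a..b}" using h by auto
  show "SP ?I \<subseteq> (\<lambda>c. {a..c}) ` {a..<k} \<union> (\<lambda>c. {c..b}) ` {k<..b} \<union> {{a..b}}"
  proof
    fix J assume J: "J \<in> SP ?I"
    then have Jc: "J \<in> conn_sets n k" "J \<subseteq> ?I" "n+1 \<notin> J" "?I - J \<in> conn_sets n k"
      unfolding SP_def r by auto
    obtain x y where xy: "1 \<le> x" "x \<le> y" "y \<le> n" "J = {x..y}" using conn_cases[OF Jc(1)] Jc(3) by auto
    have xyab: "a \<le> x" "y \<le> b" using xy Jc(2) nab by auto
    have n1: "n+1 \<in> ?I - J" using Jc by auto
    show "J \<in> (\<lambda>c. {a..c}) ` {a..<k} \<union> (\<lambda>c. {c..b}) ` {k<..b} \<union> {{a..b}}"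
    proof (cases "x = a \<and> y = b")
      case True then show ?thesis using xy by auto
    next
      case False
      have "\<exists>u. u \<in> ?I - J \<and> u \<noteq> n+1"
      proof (cases "x = a")
        case True
        then have "y \<noteq> b" using False by simp
        then have "b \<notin> J" using xy xyab by auto
        moreover have "b \<in> ?I" "b \<noteq> n+1" using h by auto
        ultimately show ?thesis by blast
      next
        case False
        then have "a \<notin> J" using xy xyab by auto
        moreover have "a \<in> ?I" "a \<noteq> n+1" using h by auto
        ultimately show ?thesis by blast
      qed
      then obtain u where u: "u \<in> ?I - J" "u \<noteq> n+1" by blast
      have kin: "k \<in> ?I - J" using k_in[OF Jc(4) n1 u] .
      then have "k < x \<or> y < k" using xy by auto
      then show ?thesis
      proof
        assume kx: "k < x"
        have "y = b"
        proof (rule ccontr)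
          assume "y \<noteq> b"
          then have "b \<in> ?I - J" using xy xyab by auto
          then have "x \<in> ?I - J" using conv[OF Jc(4) kin, of b x] kx xy xyab h by auto
          then show False using xy by auto
        qed
        then show ?thesis using xy kx xyab by auto
      next
        assume yk: "y < k"
        have "x = a"
        proof (rule ccontr)
          assume "x \<noteq> a"
          then have "a \<in> ?I - J" using xy xyab by auto
          then have "x \<in> ?I - J" using conv[OF Jc(4) _ kin, of a x] yk xy xyab h by auto
          then show False using xy by auto
        qed
        then show ?thesis using xy yk xyab by auto
      qed
    qed
  qed
  have mem: "J \<in> SP ?I" if "J \<in> conn_sets n k" "J \<subseteq> {a..b}" "?I - J \<in> conn_sets n k" for J
  proof -
    have "n+1 \<notin> J" using that(2) nab by blast
    then show ?thesis unfolding SP_def r using that by blast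
  qed
  show "(\<lambda>c. {a..c}) ` {a..<k} \<union> (\<lambda>c. {c..b}) ` {k<..b} \<union> {{a..b}} \<subseteq> SP ?I"
  proof
    fix J assume "J \<in> (\<lambda>c. {a..c}) ` {a..<k} \<union> (\<lambda>c. {c..b}) ` {k<..b} \<union> {{a..b}}"
    then have "J \<in> (\<lambda>c. {a..c}) ` {a..<k} \<or> J \<in> (\<lambda>c. {c..b}) ` {k<..b} \<or> J = {a..b}" by blast
    then show "J \<in> SP ?I"
    proof (elim disjE)
      assume "J \<in> (\<lambda>c. {a..c}) ` {a..<k}"
      then obtain c where c: "c \<in> {a..<k}" "J = {a..c}" by blast
      have "?I - J = insert (n+1) {c+1..b}" using c h by auto
      moreover have "insert (n+1) {c+1..b} \<in> conn_sets n k" using star_conn[of "c+1" b] c h by auto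
      moreover have "J \<in> conn_sets n k" using interval_conn[of a c] c h by auto
      moreover have "J \<subseteq> {a..b}" using c h by auto
      ultimately show ?thesis using mem by simp
    next
      assume "J \<in> (\<lambda>c. {c..b}) ` {k<..b}"
      then obtain c where c: "c \<in> {k<..b}" "J = {c..b}" by blast
      have "?I - J = insert (n+1) {a..c-1}" using c h by auto
      moreover have "insert (n+1) {a..c-1} \<in> conn_sets n k" using star_conn[of a "c-1"] c h by auto
      moreover have "J \<in> conn_sets n k" using interval_conn[of c b] c h by auto
      moreover have "J \<subseteq> {a..b}" using c h by auto
      ultimately show ?thesis using mem by simp
    next
      assume J: "J = {a..b}"
      have "?I - J = {n+1}" using J nab by auto
      moreover have "J \<in> conn_sets n k" using interval_conn[of a b] J h by auto
      ultimately show ?thesis using mem single_conn J by simp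
    qed
  qed
qed

lemma card_SP_star:
  assumes h: "1 \<le> a" "a \<le> k" "k \<le> b" "b \<le> n"
  shows "card (SP (insert (n+1) {a..b})) = card (insert (n+1) {a..b}) - 1"
proof -
  let ?X = "(\<lambda>c. {a..c}) ` {a..<k}" and ?Y = "(\<lambda>c. {c..b}) ` {k<..b}"
  have i1: "inj_on (\<lambda>c. {a..c}) {a..<k}" by (rule inj_onI) (auto simp: Icc_eq_Icc)
  have i2: "inj_on (\<lambda>c. {c..b}) {k<..b}" by (rule inj_onI) (auto simp: Icc_eq_Icc)
  have cX: "card ?X = k - a" using i1 by (simp add: card_image)
  have cY: "card ?Y = b - k" using i2 by (simp add: card_image)
  have d1: "?X \<inter> ?Y = {}"
  proof (rule ccontr)
    assume "?X \<inter> ?Y \<noteq> {}"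
    then obtain c c' where "a \<le> c" "c < k" "k < c'" "c' \<le> b" "{a..c} = {c'..b}" by auto
    then show False by (simp add: Icc_eq_Icc)
  qed
  have d2: "{a..b} \<notin> ?X \<union> ?Y" using h by (auto simp: Icc_eq_Icc)
  have fin: "finite ?X" "finite ?Y" by auto
  have "card (?X \<union> ?Y \<union> {{a..b}}) = card (?X \<union> ?Y) + 1" using d2 fin by simp
  also have "card (?X \<union> ?Y) = card ?X + card ?Y" using card_Un_disjoint[OF fin d1] .
  finally have "card (SP (insert (n+1) {a..b})) = k - a + (b - k) + 1" using SP_star[OF h] cX cY by simp
  moreover have "card (insert (n+1) {a..b}) = b + 2 - a" using h by auto
  ultimately show ?thesis using h by simp
qed

lemma card_SP:
  assumes I: "I \<in> conn_sets n k"
  shows "card (SP I) = card I - 1"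
  using conn_cases[OF I]
proof (elim disjE exE conjE)
  fix a b assume "1 \<le> a" "a \<le> b" "b \<le> n" "I = {a..b}"
  then show ?thesis using card_SP_interval by simp
next
  assume "I = {n+1}" then show ?thesis using SP_single by simp
next
  fix a b assume "1 \<le> a" "a \<le> k" "k \<le> b" "b \<le> n" "I = insert (n+1) {a..b}"
  then show ?thesis using card_SP_star by simp
qed

end



lemma card_split:
  assumes "finite A" "S \<subseteq> A" "inj_on g (A - S)" "g ` S \<subseteq> g ` (A - S)"
  shows "card A - card (g ` A) = card S"
proof -
  have "g ` A = g ` (A - S) \<union> g ` S" using assms(2) by blast
  then have "g ` A = g ` (A - S)" using assms(4) by blast
  then have "card (g ` A) = card (A - S)" using card_image[OF assms(3)] by simp
  also have "\<dots> = card A - card S" using card_Diff_subset[OF finite_subset[OF assms(2,1)] assms(2)] .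
  finally show ?thesis using card_mono[OF assms(1,2)] by simp
qed

lemma ind_inj: "inj ind"
proof (rule injI)
  fix I J assume "ind I = ind J"
  then have "\<forall>j. (j \<in> I) = (j \<in> J)" unfolding ind_def by (metis one_neq_zero)
  then show "I = J" by blast
qed

lemma hyp_ind:
  assumes "I \<subseteq> {1..m}"
  shows "hyp m (ind I) = H_of m I"
proof -
  have "(\<Sum>i=1..m. ind I i * x i) = (\<Sum>i\<in>I. x i)" for x :: "nat \<Rightarrow> rat"
  proof -
    have "(\<Sum>i=1..m. ind I i * x i) = (\<Sum>i\<in>{1..m}. if i \<in> I then x i else 0)"
      unfolding ind_def by (rule sum.cong) auto
    also have "\<dots> = (\<Sum>i\<in>{i \<in> {1..m}. i \<in> I}. x i)" using sum.inter_filter[of "{1..m}" x "\<lambda>i. i \<in> I"] by simp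
    also have "{i \<in> {1..m}. i \<in> I} = I" using assms by auto
    finally show ?thesis .
  qed
  then show ?thesis unfolding hyp_def H_of_def by simp
qed

lemma ind_amb: "I \<subseteq> {1..m} \<Longrightarrow> ind I \<in> ambient m"
  unfolding ind_def ambient_def by auto

lemma ind_nz: "I \<noteq> {} \<Longrightarrow> ind I \<noteq> (\<lambda>_. 0)"
proof
  assume "I \<noteq> {}" "ind I = (\<lambda>_. 0)"
  then obtain j where "j \<in> I" by auto
  then have "ind I j = 1" unfolding ind_def by simp
  then show False using \<open>ind I = (\<lambda>_. 0)\<close> by simp
qed

context apg begin

lemma H_inj_conn: "inj_on (H_of (n+1)) (conn_sets n k)"
  by (rule inj_onI) (use H_inj conn_sub in blast)

lemma block_indep:
  assumes s: "1 \<le> s" and B: "B \<subseteq> {I \<in> conn_sets n k. card I = s}"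
  shows "indep_hyps (n+1) (H_of (n+1) ` B)"
proof -
  let ?g = "the_inv_into (conn_sets n k) (H_of (n+1))"
  let ?f = "\<lambda>H. ind (?g H)"
  have BC: "B \<subseteq> conn_sets n k" using B by auto
  have gI: "?g (H_of (n+1) I) = I" if "I \<in> B" for I
    using the_inv_into_f_f[OF H_inj_conn] that BC by auto
  have finB: "finite B" using BC conn_fam_fin finite_subset by auto
  have fimg: "?f ` (H_of (n+1) ` B) = ind ` B"
  proof -
    have "?f ` (H_of (n+1) ` B) = (\<lambda>I. ?f (H_of (n+1) I)) ` B" by (rule image_image)
    also have "\<dots> = ind ` B" by (rule image_cong[OF refl]) (use gI in simp)
    finally show ?thesis .
  qed
  have "inj_on ?f (H_of (n+1) ` B)"
  proof (rule inj_onI)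
    fix H1 H2 assume "H1 \<in> H_of (n+1) ` B" "H2 \<in> H_of (n+1) ` B" "?f H1 = ?f H2"
    then obtain I1 I2 where "I1 \<in> B" "I2 \<in> B" "H1 = H_of (n+1) I1" "H2 = H_of (n+1) I2" "ind I1 = ind I2"
      using gI by auto
    then show "H1 = H2" using ind_inj by (auto dest: injD)
  qed
  moreover have "\<forall>H\<in>H_of (n+1) ` B. ?f H \<in> ambient (n+1) \<and> ?f H \<noteq> (\<lambda>_. 0) \<and> H = hyp (n+1) (?f H)"
  proof
    fix H assume "H \<in> H_of (n+1) ` B"
    then obtain I where I: "I \<in> B" "H = H_of (n+1) I" by auto
    have "I \<subseteq> {1..n+1}" "I \<noteq> {}" using I BC conn_sub conn_ne by auto
    then show "?f H \<in> ambient (n+1) \<and> ?f H \<noteq> (\<lambda>_. 0) \<and> H = hyp (n+1) (?f H)"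
      using I gI ind_amb ind_nz hyp_ind by auto
  qed
  moreover have "lin_indep_forms (n+1) (?f ` (H_of (n+1) ` B))"
    unfolding fimg lin_indep_forms_def
  proof (intro conjI allI impI ballI)
    show "finite (ind ` B)" using finB by simp
    fix c :: "(nat \<Rightarrow> rat) \<Rightarrow> rat" and a
    assume h: "\<forall>j\<in>{1..n+1}. (\<Sum>a\<in>ind ` B. c a * a j) = 0" and a: "a \<in> ind ` B"
    have "\<forall>j\<in>{1..n+1}. (\<Sum>I\<in>B. c (ind I) * ind I j) = 0"
    proof
      fix j assume "j \<in> {1..n+1}"
      then have "(\<Sum>a\<in>ind ` B. c a * a j) = 0" using h by auto
      moreover have "(\<Sum>a\<in>ind ` B. c a * a j) = (\<Sum>I\<in>B. c (ind I) * ind I j)"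
        using sum.reindex[of ind B "\<lambda>a. c a * a j"] inj_on_subset[OF ind_inj] by auto
      ultimately show "(\<Sum>I\<in>B. c (ind I) * ind I j) = 0" by simp
    qed
    then have "\<forall>I\<in>B. c (ind I) = 0" using indep_family[OF s B, of "\<lambda>I. c (ind I)"] by simp
    then show "c a = 0" using a by auto
  qed
  ultimately show ?thesis unfolding indep_hyps_def by blast
qed

end



context apg begin

lemma cond3:
  assumes Isub: "\<I> \<subseteq> conn_sets n k"
    and ideal: "\<And>I J. I \<in> \<I> \<Longrightarrow> J \<in> conn_sets n k \<Longrightarrow> J \<subseteq> I \<Longrightarrow> J \<in> \<I>"
    and I: "I \<in> \<I>" and cI: "card I = Suc t"
  shows "card (H_of (n+1) ` {J\<in>\<I>. card J \<le> t}) - card ((\<lambda>H'. H_of (n+1) I \<inter> H') ` (H_of (n+1) ` {J\<in>\<I>. card J \<le> t})) = t"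
proof -
  let ?A = "{J\<in>\<I>. card J \<le> t}"
  let ?g = "\<lambda>J. H_of (n+1) I \<inter> H_of (n+1) J"
  have Ic: "I \<in> conn_sets n k" using I Isub by auto
  have finI: "finite I" using conn_fin[OF Ic] .
  have AC: "?A \<subseteq> conn_sets n k" using Isub by auto
  have finA: "finite ?A" using finite_subset[OF AC conn_fam_fin] .
  have c1: "card (H_of (n+1) ` ?A) = card ?A"
    using card_image[OF inj_on_subset[OF H_inj_conn AC]] .
  have c2: "(\<lambda>H'. H_of (n+1) I \<inter> H') ` (H_of (n+1) ` ?A) = ?g ` ?A" by (rule image_image)
  have rin: "rI I \<in> I" using rI_in[OF Ic] .
  have SPA: "SP I \<subseteq> ?A"
  proof
    fix J assume J: "J \<in> SP I"
    then have Jc: "J \<in> conn_sets n k" "J \<subseteq> I" "rI I \<notin> J" unfolding SP_def by auto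
    have "J \<in> \<I>" using ideal[OF I Jc(1,2)] .
    moreover have "J \<subset> I" using Jc rin by auto
    then have "card J < card I" using psubset_card_mono[OF finI] by blast
    ultimately show "J \<in> ?A" using cI by auto
  qed
  have inj: "inj_on ?g (?A - SP I)"
  proof (rule inj_onI)
    fix J1 J2 assume J1: "J1 \<in> ?A - SP I" and J2: "J2 \<in> ?A - SP I" and eq: "?g J1 = ?g J2"
    show "J1 = J2"
    proof (rule ccontr)
      assume ne: "J1 \<noteq> J2"
      have J1c: "J1 \<in> conn_sets n k" "J2 \<in> conn_sets n k" using J1 J2 AC by auto
      have subs: "I \<subseteq> {1..n+1}" "J1 \<subseteq> {1..n+1}" "J2 \<subseteq> {1..n+1}" using Ic J1c conn_sub by auto
      have cards: "card J1 < card I" "card J2 < card I" using J1 J2 cI by auto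
      have "J1 \<inter> J2 = {} \<and> J1 \<union> J2 = I"
      proof (cases "J2 - J1 = {}")
        case False
        then obtain p where "p \<in> J2" "p \<notin> J1" by auto
        moreover have "H_of (n+1) I \<inter> H_of (n+1) J1 \<subseteq> H_of (n+1) J2" using eq by auto
        ultimately show ?thesis using split_lemma[OF subs cards(1) cards(2)] by blast
      next
        case True
        then obtain p where "p \<in> J1" "p \<notin> J2" using ne by auto
        moreover have "H_of (n+1) I \<inter> H_of (n+1) J2 \<subseteq> H_of (n+1) J1" using eq by auto
        ultimately have "J2 \<inter> J1 = {} \<and> J2 \<union> J1 = I"
          using split_lemma[OF subs(1,3,2) cards(2) cards(1)] by blast
        then show ?thesis by auto
      qed
      then have dj: "J1 \<inter> J2 = {}" "J1 \<union> J2 = I" by auto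
      show False
      proof (cases "rI I \<in> J1")
        case True
        then have "rI I \<notin> J2" using dj by auto
        moreover have "I - J2 = J1" using dj by auto
        ultimately have "J2 \<in> SP I" unfolding SP_def using J1c dj by auto
        then show False using J2 by auto
      next
        case False
        moreover have "I - J1 = J2" using dj by auto
        ultimately have "J1 \<in> SP I" unfolding SP_def using J1c dj by auto
        then show False using J1 by auto
      qed
    qed
  qed
  have img: "?g ` SP I \<subseteq> ?g ` (?A - SP I)"
  proof
    fix H assume "H \<in> ?g ` SP I"
    then obtain J where J: "J \<in> SP I" "H = ?g J" by auto
    then have Jc: "J \<in> conn_sets n k" "J \<subseteq> I" "rI I \<notin> J" "I - J \<in> conn_sets n k" unfolding SP_def by auto
    let ?J' = "I - J"
    have "?J' \<in> \<I>" using ideal[OF I Jc(4)] by auto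
    moreover have "?J' \<subset> I" using conn_ne[OF Jc(1)] Jc(2) by auto
    then have "card ?J' < card I" using psubset_card_mono[OF finI] by blast
    moreover have "?J' \<notin> SP I" unfolding SP_def using rin Jc by auto
    ultimately have J'A: "?J' \<in> ?A - SP I" using cI by auto
    have "?g J = ?g ?J'" using split_eq[of I "n+1" J ?J'] conn_sub[OF Ic] Jc by auto
    then show "H \<in> ?g ` (?A - SP I)" using J J'A by auto
  qed
  have "card ?A - card (?g ` ?A) = card (SP I)" using card_split[OF finA SPA inj img] .
  also have "\<dots> = t" using card_SP[OF Ic] cI by simp
  finally show ?thesis using c1 c2 by simp
qed

end



context apg begin

lemma main:
  assumes Isub: "\<I> \<subseteq> conn_sets n k"
    and ideal: "\<And>I J. I \<in> \<I> \<Longrightarrow> J \<in> conn_sets n k \<Longrightarrow> J \<subseteq> I \<Longrightarrow> J \<in> \<I>"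
  shows "MAT_free (n + 1) (H_of (n + 1) ` \<I>)"
proof -
  let ?H = "H_of (n+1)"
  define Bs where "Bs s = {I \<in> \<I>. card I = s}" for s
  define M where "M = (if \<I> = {} then 0 else Max (card ` \<I>))"
  define ps where "ps = map (\<lambda>t. ?H ` Bs (Suc t)) [0..<M]"
  have finI: "finite \<I>" using finite_subset[OF Isub conn_fam_fin] .
  have cpos: "1 \<le> card I" "card I \<le> M" if "I \<in> \<I>" for I
  proof -
    have Ic: "I \<in> conn_sets n k" using that Isub by auto
    show "1 \<le> card I" using conn_fin[OF Ic] conn_ne[OF Ic] by (simp add: Suc_le_eq card_gt_0_iff)
    show "card I \<le> M" unfolding M_def using that finI by auto
  qed
  have Bne: "Bs (Suc t) \<noteq> {}" if t: "t < M" for t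
  proof -
    have ne: "\<I> \<noteq> {}" using t M_def by (cases "\<I> = {}") auto
    then have "M \<in> card ` \<I>" unfolding M_def using finI by simp
    then obtain I0 where I0: "I0 \<in> \<I>" "card I0 = M" by auto
    have I0c: "I0 \<in> conn_sets n k" using I0 Isub by auto
    obtain J where "J \<in> conn_sets n k" "J \<subseteq> I0" "card J = Suc t" using shrink[OF I0c, of "Suc t"] t I0 by auto
    then have "J \<in> Bs (Suc t)" unfolding Bs_def using ideal[OF I0(1)] by auto
    then show ?thesis by auto
  qed
  have lenps: "length ps = M" unfolding ps_def by simp
  have nth: "ps ! t = ?H ` Bs (Suc t)" if "t < M" for t unfolding ps_def using that by simp
  have Hinj: "inj_on ?H \<I>" using inj_on_subset[OF H_inj_conn Isub] .
  have takeU: "\<Union>(set (take t ps)) = ?H ` {J \<in> \<I>. card J \<le> t}" if "t \<le> M" for t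
  proof -
    have "take t ps = map (\<lambda>t. ?H ` Bs (Suc t)) [0..<t]" unfolding ps_def using that by (simp add: take_map)
    then have "set (take t ps) = (\<lambda>t. ?H ` Bs (Suc t)) ` {0..<t}" by simp
    then have "\<Union>(set (take t ps)) = (\<Union>i\<in>{0..<t}. ?H ` Bs (Suc i))" by simp
    also have "\<dots> = ?H ` {J \<in> \<I>. card J \<le> t}"
    proof
      show "(\<Union>i\<in>{0..<t}. ?H ` Bs (Suc i)) \<subseteq> ?H ` {J \<in> \<I>. card J \<le> t}" unfolding Bs_def by auto
      show "?H ` {J \<in> \<I>. card J \<le> t} \<subseteq> (\<Union>i\<in>{0..<t}. ?H ` Bs (Suc i))"
      proof
        fix H assume "H \<in> ?H ` {J \<in> \<I>. card J \<le> t}"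
        then obtain J where J: "J \<in> \<I>" "card J \<le> t" "H = ?H J" by auto
        have "1 \<le> card J" using cpos J by auto
        then have "card J - 1 \<in> {0..<t}" "J \<in> Bs (Suc (card J - 1))" using J unfolding Bs_def by auto
        then show "H \<in> (\<Union>i\<in>{0..<t}. ?H ` Bs (Suc i))" using J by blast
      qed
    qed
    finally show ?thesis .
  qed
  have op: "ordered_partition (?H ` \<I>) ps"
    unfolding ordered_partition_def
  proof (intro conjI ballI allI impI)
    fix p assume "p \<in> set ps"
    then obtain t where "t < M" "p = ?H ` Bs (Suc t)" unfolding ps_def by auto
    then show "p \<noteq> {}" using Bne by auto
  next
    fix i j assume ij: "i < length ps" "j < length ps" "i \<noteq> j"
    show "ps ! i \<inter> ps ! j = {}"
    proof (rule ccontr)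
      assume "ps ! i \<inter> ps ! j \<noteq> {}"
      then obtain I J where IJ: "I \<in> Bs (Suc i)" "J \<in> Bs (Suc j)" "?H I = ?H J"
        using nth ij lenps by auto
      then have "I = J" using Hinj unfolding Bs_def by (auto dest: inj_onD)
      then show False using IJ ij unfolding Bs_def by auto
    qed
  next
    show "\<Union>(set ps) = ?H ` \<I>"
    proof -
      have "ps = take M ps" using lenps by simp
      then have "\<Union>(set ps) = ?H ` {J \<in> \<I>. card J \<le> M}" using takeU[of M] by simp
      also have "{J \<in> \<I>. card J \<le> M} = \<I>" using cpos by auto
      finally show ?thesis .
    qed
  qed
  have conds: "let Ak = \<Union>(set (take t ps)); p = ps ! t in
        indep_hyps (n+1) p \<and>
        \<not> (ambient (n+1) \<inter> \<Inter>p \<subseteq> \<Union>Ak) \<and>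
        (\<forall>H\<in>p. card Ak - card ((\<lambda>H'. H \<inter> H') ` Ak) = t)" if t: "t < length ps" for t
  proof -
    have tM: "t < M" using t lenps by simp
    have Ak: "\<Union>(set (take t ps)) = ?H ` {J \<in> \<I>. card J \<le> t}" using takeU tM by simp
    have p: "ps ! t = ?H ` Bs (Suc t)" using nth tM .
    have c1: "indep_hyps (n+1) (?H ` Bs (Suc t))"
      by (rule block_indep[of "Suc t" "Bs (Suc t)"]) (use Isub in \<open>auto simp: Bs_def\<close>)
    have c2: "\<not> (ambient (n+1) \<inter> \<Inter>(?H ` Bs (Suc t)) \<subseteq> \<Union>(?H ` {J \<in> \<I>. card J \<le> t}))"
    proof (cases "t = 0")
      case True
      have "{J \<in> \<I>. card J \<le> t} = {}" using cpos True by fastforce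
      moreover have "(\<lambda>_. 0) \<in> ambient (n+1) \<inter> \<Inter>(?H ` Bs (Suc t))"
        unfolding ambient_def H_of_def by auto
      ultimately show ?thesis by auto
    next
      case False
      let ?s = "Suc t"
      have s2: "2 \<le> ?s" using False by simp
      have "xv ?s \<in> ambient (n+1) \<inter> \<Inter>(?H ` Bs (Suc t))"
      proof -
        have "xv ?s \<in> ?H I" if "I \<in> Bs ?s" for I
        proof -
          have "I \<in> conn_sets n k" "card I = ?s" using that Isub unfolding Bs_def by auto
          then have "(\<Sum>j\<in>I. xv ?s j) = 0" using cond2_vec[OF s2] by simp
          then show ?thesis using xv_amb unfolding H_of_def by auto
        qed
        then show ?thesis using xv_amb by auto
      qed
      moreover have "xv ?s \<notin> \<Union>(?H ` {J \<in> \<I>. card J \<le> t})"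
      proof
        assume "xv ?s \<in> \<Union>(?H ` {J \<in> \<I>. card J \<le> t})"
        then obtain J where J: "J \<in> \<I>" "card J \<le> t" "xv ?s \<in> ?H J" by auto
        have "J \<in> conn_sets n k" using J Isub by auto
        then have "(\<Sum>j\<in>J. xv ?s j) \<noteq> 0" using cond2_vec[OF s2, of J] J by simp
        then show False using J unfolding H_of_def by auto
      qed
      ultimately show ?thesis by blast
    qed
    have c3: "\<forall>H\<in>?H ` Bs (Suc t). card (?H ` {J \<in> \<I>. card J \<le> t}) - card ((\<lambda>H'. H \<inter> H') ` (?H ` {J \<in> \<I>. card J \<le> t})) = t"
    proof
      fix H assume "H \<in> ?H ` Bs (Suc t)"
      then obtain I where I: "I \<in> \<I>" "card I = Suc t" "H = ?H I" unfolding Bs_def by auto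
      show "card (?H ` {J \<in> \<I>. card J \<le> t}) - card ((\<lambda>H'. H \<inter> H') ` (?H ` {J \<in> \<I>. card J \<le> t})) = t"
        using cond3[OF Isub ideal I(1,2)] I(3) by simp
    qed
    show ?thesis unfolding Let_def Ak p using c1 c2 c3 by blast
  qed
  show ?thesis unfolding MAT_free_def using op conds by blast
qed

end

theorem mainTheorem13:
  fixes n k :: nat and \<I> :: "nat set set"
  assumes "1 \<le> k" and "k \<le> n"
    and "\<I> \<subseteq> conn_sets n k"
    and "\<And>I J. I \<in> \<I> \<Longrightarrow> J \<in> conn_sets n k \<Longrightarrow> J \<subseteq> I \<Longrightarrow> J \<in> \<I>"
  shows "MAT_free (n + 1) (H_of (n + 1) ` \<I>)"
proof -
  interpret apg n k using assms(1,2) by unfold_locales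
  show ?thesis by (rule main) (use assms in auto)
qed


end
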